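(* Assume $d\ge3$ and $d'=1$, write the unique row of $V$ as $v=(v_1,\dots,v_d)$, and fix $j\in[t]$. For parameters $W$, let $T=(T_{k_1k_2k_3})_{k_1,k_2,k_3\in[d]}$ be the symmetric tensor with $T_{k_1k_2k_3}=y_j(\{k_1,k_2,k_3\})$ evaluated at $\mu(W)$, and let $f_T(x)=\sum_{k_1,k_2,k_3\in[d]}T_{k_1k_2k_3}x_{k_1}x_{k_2}x_{k_3}$. Let $N=(T_{k,k,k_3})_{k,k_3\in[d]}\in\mathbb R^{d\times d}$. Then: (1) $\operatorname{rank}(N)\le 2\operatorname{rank}(A)+1$; in particular, if $2\operatorname{rank}(A)+1<d$ then all $(2\operatorname{rank}(A)+2)$-minors of $N$ vanish. (2) $f_T(x)=(x^\top Ax)(v^\top x)$, so $f_T$ is a product of a linear form and a quadratic form (if $f_T\neq0$, $[f_T]$ lies on the Chow variety of split type $(2,1)$ in $\mathbb P(S^3)$). Consequently $M_{\mathrm{Lie}}(f_T)$ has rank $<d^2-1$, and every maximal $(d^2-1)\times(d^2-1)$ minor of $M_{\mathrm{Lie}}$, regarded as a polynomial in the coordinates $y_j(\mathcal K)$ via the coefficients of $f_T$, vanishes on the attention variety.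
   Context: Setup: $Q,K\in\mathbb R^{a\times d}$, $V\in\mathbb R^{1\times d}$, $A=K^\top Q$, $\varphi_W(X)=VX(X^\top AX)$ for $X=(x_{kn})\in\mathbb R^{d\times t}$. For $\mathcal K\in\operatorname{Mult}_3([d])$ (size-3 multisets on $[d]$), $c_j(\mathcal K)$ is the coefficient of $\prod_{u\in\mathcal K}x_{uj}$ in $\varphi_W(X)[1,j]$ and $y_j(\mathcal K)=c_j(\mathcal K)/|\operatorname{Perm}(\mathcal K)|$, where $\operatorname{Perm}(\mathcal K)$ is the set of distinct orderings of $\mathcal K$. The map $\mu$ sends $W$ to all such scaled coefficients (and the analogous scaled cross-column coefficients); the attention variety is the Zariski closure of $\operatorname{im}\mu$. $S^3$ is the space of cubic forms in $x_1,\dots,x_d$. The Lie algebra flattening matrix $M_{\mathrm{Lie}}(f)$ of a cubic $f$ is the $\binom{d+2}{3}\times(d^2-1)$ matrix, in the monomial basis of $S^3$ and the basis $\{E_{uv}\ (u\ne v),\ H_u=E_{uu}-E_{dd}\ (u<d)\}$ of $\mathfrak{sl}_d$ (with $E_{uv}=x_u\partial/\partial x_v$), of the linear map $\mathfrak{sl}_d\to S^3$, $D\mapsto D(f)$, where $(m_{uv})$ acts as $\sum m_{uv}x_u\partial/\partial x_v$. The Chow variety of split type $(2,1)$ is the image of $\mathbb P(S^1)\times\mathbb P(S^2)\to\mathbb P(S^3)$, $([\ell],[q])\mapsto[\ell q]$. *)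

theory Defs
  imports "Jordan_Normal_Form.DL_Rank_Submatrix" "HOL-Library.Poly_Mapping"
    "HOL-Library.Multiset" "HOL-Combinatorics.Multiset_Permutations"
begin

text \<open>Polynomials in the entries x_kn of X (k = row, n = column), real coefficients,
  monomials are finitely supported exponent maps (nat \<times> nat) \<Rightarrow> nat.
  Indices are 0-based: [d] is {0..<d}, [t] is {0..<t}.\<close>

type_synonym rpoly = "((nat \<times> nat) \<Rightarrow>\<^sub>0 nat) \<Rightarrow>\<^sub>0 real"

definition pvar :: "nat \<Rightarrow> nat \<Rightarrow> rpoly" where
  "pvar k n = Poly_Mapping.single (Poly_Mapping.single (k, n) 1) 1"

definition pconst :: "real \<Rightarrow> rpoly" where
  "pconst c = Poly_Mapping.single 0 c"

definition Xmat :: "nat \<Rightarrow> nat \<Rightarrow> rpoly mat" where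
  "Xmat d t = mat d t (\<lambda>(k, n). pvar k n)"

definition attn_A :: "real mat \<Rightarrow> real mat \<Rightarrow> real mat" where
  "attn_A Q K = transpose_mat K * Q"

definition phi :: "real mat \<Rightarrow> real mat \<Rightarrow> real mat \<Rightarrow> nat \<Rightarrow> rpoly mat" where
  "phi Q K V t = (let X = Xmat (dim_col Q) t in
      map_mat pconst V * X * (transpose_mat X * map_mat pconst (attn_A Q K) * X))"

definition col_monomial :: "nat \<Rightarrow> nat multiset \<Rightarrow> (nat \<times> nat) \<Rightarrow>\<^sub>0 nat" where
  "col_monomial j Km = sum_mset (image_mset (\<lambda>u. Poly_Mapping.single (u, j) (1::nat)) Km)"

definition coeff_c :: "real mat \<Rightarrow> real mat \<Rightarrow> real mat \<Rightarrow> nat \<Rightarrow> nat \<Rightarrow> nat multiset \<Rightarrow> real" where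
  "coeff_c Q K V t j Km = Poly_Mapping.lookup (phi Q K V t $$ (0, j)) (col_monomial j Km)"

definition y_coord :: "real mat \<Rightarrow> real mat \<Rightarrow> real mat \<Rightarrow> nat \<Rightarrow> nat \<Rightarrow> nat multiset \<Rightarrow> real" where
  "y_coord Q K V t j Km = coeff_c Q K V t j Km / real (card (permutations_of_multiset Km))"

definition T_tensor :: "real mat \<Rightarrow> real mat \<Rightarrow> real mat \<Rightarrow> nat \<Rightarrow> nat \<Rightarrow> nat \<Rightarrow> nat \<Rightarrow> nat \<Rightarrow> real" where
  "T_tensor Q K V t j k1 k2 k3 = y_coord Q K V t j {#k1, k2, k3#}"

definition f_T :: "nat \<Rightarrow> (nat \<Rightarrow> nat \<Rightarrow> nat \<Rightarrow> real) \<Rightarrow> (nat \<Rightarrow> real) \<Rightarrow> real" where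
  "f_T d T x = (\<Sum>k1<d. \<Sum>k2<d. \<Sum>k3<d. T k1 k2 k3 * x k1 * x k2 * x k3)"

definition N_mat :: "nat \<Rightarrow> (nat \<Rightarrow> nat \<Rightarrow> nat \<Rightarrow> real) \<Rightarrow> real mat" where
  "N_mat d T = mat d d (\<lambda>(k, k3). T k k k3)"

text \<open>Coefficients of f_T in the monomial basis of S^3: the coefficient of x^m
  (m a size-3 multiset) is the sum of T over all index triples with multiset m.\<close>
definition cubic_coeff :: "nat \<Rightarrow> (nat \<Rightarrow> nat \<Rightarrow> nat \<Rightarrow> real) \<Rightarrow> nat multiset \<Rightarrow> real" where
  "cubic_coeff d T m = (\<Sum>k1<d. \<Sum>k2<d. \<Sum>k3<d. if {#k1, k2, k3#} = m then T k1 k2 k3 else 0)"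

definition monos3 :: "nat \<Rightarrow> nat multiset list" where
  "monos3 d = [{#a, b, c#}. c \<leftarrow> [0..<d], b \<leftarrow> [0..<Suc c], a \<leftarrow> [0..<Suc b]]"

text \<open>Basis of sl_d: Inl (u,v) is E_uv (u \<noteq> v), Inr u is H_u = E_uu - E_{d-1,d-1} (u < d-1).\<close>
definition sl_basis :: "nat \<Rightarrow> ((nat \<times> nat) + nat) list" where
  "sl_basis d = [Inl (u, v). u \<leftarrow> [0..<d], v \<leftarrow> [0..<d], u \<noteq> v] @ [Inr u. u \<leftarrow> [0..<d - 1]]"

text \<open>Action of E_uv = x_u d/dx_v on a cubic given by its coefficient function cf:
  the coefficient of x^m' in E_uv(f).\<close>
definition E_act :: "nat \<Rightarrow> nat \<Rightarrow> (nat multiset \<Rightarrow> real) \<Rightarrow> nat multiset \<Rightarrow> real" where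
  "E_act u v cf m' = (if u \<in># m' then
      (let m0 = m' - {#u#} + {#v#} in real (count m0 v) * cf m0) else 0)"

definition lie_act :: "nat \<Rightarrow> (nat multiset \<Rightarrow> real) \<Rightarrow> ((nat \<times> nat) + nat) \<Rightarrow> nat multiset \<Rightarrow> real" where
  "lie_act d cf b m = (case b of
      Inl (u, v) \<Rightarrow> E_act u v cf m
    | Inr u \<Rightarrow> E_act u u cf m - E_act (d - 1) (d - 1) cf m)"

definition M_Lie :: "nat \<Rightarrow> (nat multiset \<Rightarrow> real) \<Rightarrow> real mat" where
  "M_Lie d cf = mat (length (monos3 d)) (length (sl_basis d))
      (\<lambda>(i, k). lie_act d cf (sl_basis d ! k) (monos3 d ! i))"

end

theory Submission
  imports Defs
begin

lemma lookup_col_monomial: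
  "Poly_Mapping.lookup (col_monomial j M) (w,n) = (if n = j then count M w else 0)"
  by (induction M) (auto simp: col_monomial_def lookup_add lookup_single when_def)

lemma col_monomial3: "col_monomial j {#a,b,c#} = Poly_Mapping.single (a,j) 1 + Poly_Mapping.single (b,j) 1 + Poly_Mapping.single (c,j) 1"
  by (simp add: col_monomial_def add.assoc add.commute add.left_commute)

lemma mono_eq:
  "(Poly_Mapping.single (k,n) 1 + Poly_Mapping.single (p,n) 1 + Poly_Mapping.single (q,j) (1::nat) = col_monomial j {#a,b,c#})
   \<longleftrightarrow> (n = j \<and> {#k,p,q#} = {#a,b,c#})"
proof
  assume h: "Poly_Mapping.single (k,n) 1 + Poly_Mapping.single (p,n) 1 + Poly_Mapping.single (q,j) (1::nat) = col_monomial j {#a,b,c#}"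
  have L: "\<And>w m. Poly_Mapping.lookup (Poly_Mapping.single (k,n) 1 + Poly_Mapping.single (p,n) 1 + Poly_Mapping.single (q,j) (1::nat)) (w,m)
     = (if (k,n) = (w,m) then 1 else 0) + (if (p,n) = (w,m) then 1 else 0) + (if (q,j) = (w,m) then 1 else 0)"
    by (simp add: lookup_add lookup_single when_def)
  have nj: "n = j"
  proof (rule ccontr)
    assume "n \<noteq> j"
    have "Poly_Mapping.lookup (col_monomial j {#a,b,c#}) (k,n) = 0" using \<open>n \<noteq> j\<close> by (simp add: lookup_col_monomial)
    moreover have "Poly_Mapping.lookup (col_monomial j {#a,b,c#}) (k,n) \<ge> 1" unfolding h[symmetric] L by simp
    ultimately show False by simp
  qed
  have "\<And>w. count {#k,p,q#} w = count {#a,b,c#} w"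
  proof -
    fix w
    have "Poly_Mapping.lookup (col_monomial j {#a,b,c#}) (w,j) = count {#a,b,c#} w" by (simp add: lookup_col_monomial)
    moreover have "Poly_Mapping.lookup (col_monomial j {#a,b,c#}) (w,j) = count {#k,p,q#} w"
      unfolding h[symmetric] L using nj by auto
    ultimately show "count {#k,p,q#} w = count {#a,b,c#} w" by simp
  qed
  then show "n = j \<and> {#k,p,q#} = {#a,b,c#}" using nj by (simp add: multiset_eq_iff)
next
  assume "n = j \<and> {#k,p,q#} = {#a,b,c#}"
  then show "Poly_Mapping.single (k,n) 1 + Poly_Mapping.single (p,n) 1 + Poly_Mapping.single (q,j) (1::nat) = col_monomial j {#a,b,c#}"
    by (metis col_monomial3)
qed

lemma phi_entry:
  assumes "Q \<in> carrier_mat a d" "K \<in> carrier_mat a d" "V \<in> carrier_mat 1 d" "j < t"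
  shows "phi Q K V t $$ (0,j) = (\<Sum>n<t. (\<Sum>k<d. pconst (V$$(0,k)) * pvar k n) *
        (\<Sum>q<d. (\<Sum>p<d. pvar p n * pconst (attn_A Q K $$ (p,q))) * pvar q j))"
  using assms unfolding phi_def Let_def
  by (simp add: index_mult_mat scalar_prod_def Xmat_def attn_A_def atLeast0LessThan)


lemma coeff_c_formula:
  assumes "Q \<in> carrier_mat a d" "K \<in> carrier_mat a d" "V \<in> carrier_mat 1 d" "j < t"
  shows "coeff_c Q K V t j {#a1,b1,c1#} = (\<Sum>q<d. \<Sum>p<d. \<Sum>k<d.
     if {#k,p,q#} = {#a1,b1,c1#} then V$$(0,k) * attn_A Q K $$ (p,q) else 0)"
proof -
  define s :: "nat \<Rightarrow> nat \<Rightarrow> (nat \<times> nat) \<Rightarrow>\<^sub>0 nat" where "s k n = Poly_Mapping.single (k,n) 1" for k n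
  have e1: "pconst c * pvar k n = Poly_Mapping.single (s k n) c" for c k n
    by (simp add: pconst_def pvar_def mult_single s_def)
  have e2: "pvar p n * pconst c * pvar q j = Poly_Mapping.single (s p n + s q j) c" for c p q n
    by (simp add: pconst_def pvar_def mult_single s_def)
  have "phi Q K V t $$ (0,j) = (\<Sum>n<t. \<Sum>q<d. \<Sum>p<d. \<Sum>k<d.
      Poly_Mapping.single (s k n + s p n + s q j) (V$$(0,k) * attn_A Q K $$ (p,q)))"
    unfolding phi_entry[OF assms] sum_product sum_distrib_right sum_distrib_left e1 e2 mult_single
    by (simp add: add.assoc)
  then have "coeff_c Q K V t j {#a1,b1,c1#} = (\<Sum>n<t. \<Sum>q<d. \<Sum>p<d. \<Sum>k<d.
      if n = j \<and> {#k,p,q#} = {#a1,b1,c1#} then V$$(0,k) * attn_A Q K $$ (p,q) else 0)"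
    unfolding coeff_c_def by (simp only: lookup_sum lookup_single when_def s_def mono_eq)
  also have "\<dots> = (\<Sum>n<t. if n = j then (\<Sum>q<d. \<Sum>p<d. \<Sum>k<d.
      if {#k,p,q#} = {#a1,b1,c1#} then V$$(0,k) * attn_A Q K $$ (p,q) else 0) else 0)"
    by (rule sum.cong) auto
  also have "\<dots> = (\<Sum>q<d. \<Sum>p<d. \<Sum>k<d.
      if {#k,p,q#} = {#a1,b1,c1#} then V$$(0,k) * attn_A Q K $$ (p,q) else 0)"
    using assms(4) by simp
  finally show ?thesis .
qed

lemma mset2_iff: "({#p,q#} = {#b,c#}) \<longleftrightarrow> (p = b \<and> q = c) \<or> (p = c \<and> q = b)"
proof
  assume h: "{#p,q#} = {#b,c#}"
  have "p \<in># {#b,c#}" unfolding h[symmetric] by simp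
  then have "p = b \<or> p = c" by auto
  then show "(p = b \<and> q = c) \<or> (p = c \<and> q = b)"
  proof
    assume "p = b" then show ?thesis using h by auto
  next
    assume "p = c" then show ?thesis using h by (auto simp: add_mset_commute)
  qed
qed (auto simp: add_mset_commute)

lemma mset3_iff: "({#k,p,q#} = {#a,b,c#}) \<longleftrightarrow>
  (k,p,q) \<in> {(a,b,c),(a,c,b),(b,a,c),(b,c,a),(c,a,b),(c,b,a)}"
proof
  assume h: "{#k,p,q#} = {#a,b,c#}"
  have r: "{#p,q#} = {#a,b,c#} - {#k#}" unfolding h[symmetric] by simp
  have "k \<in># {#a,b,c#}" unfolding h[symmetric] by simp
  then have "k = a \<or> k = b \<or> k = c" by auto
  moreover have "k = a \<Longrightarrow> {#p,q#} = {#b,c#}" using r by simp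
  moreover have "k = b \<Longrightarrow> {#p,q#} = {#a,c#}" using r by (simp add: add_mset_commute)
  moreover have "k = c \<Longrightarrow> {#p,q#} = {#a,b#}" using r by (simp add: add_mset_commute)
  ultimately show "(k,p,q) \<in> {(a,b,c),(a,c,b),(b,a,c),(b,c,a),(c,a,b),(c,b,a)}"
    unfolding mset2_iff by auto
qed (auto simp: add_mset_commute)

lemma perms3: "permutations_of_multiset {#a,b,c#} = {[a,b,c],[a,c,b],[b,a,c],[b,c,a],[c,a,b],[c,b,a]}"
proof -
  have "mset xs = {#a,b,c#} \<longleftrightarrow> xs \<in> {[a,b,c],[a,c,b],[b,a,c],[b,c,a],[c,a,b],[c,b,a]}" for xs
  proof
    assume h: "mset xs = {#a,b,c#}"
    have "length xs = 3" using arg_cong[OF h, of size] by simp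
    then have "\<exists>x y z. xs = [x,y,z]"
      by (cases xs; cases "tl xs"; cases "tl (tl xs)") (auto simp: numeral_3_eq_3)
    then obtain x y z where xs: "xs = [x,y,z]" by blast
    then have "{#x,y,z#} = {#a,b,c#}" using h by (simp add: add_mset_commute)
    then show "xs \<in> {[a,b,c],[a,c,b],[b,a,c],[b,c,a],[c,a,b],[c,b,a]}" unfolding mset3_iff xs by auto
  next
    assume "xs \<in> {[a,b,c],[a,c,b],[b,a,c],[b,c,a],[c,a,b],[c,b,a]}"
    then show "mset xs = {#a,b,c#}" by (elim insertE emptyE) (simp_all add: add_mset_commute)
  qed
  then show ?thesis unfolding permutations_of_multiset_def by blast
qed

lemma six_sum:
  fixes g :: "nat \<Rightarrow> nat \<Rightarrow> nat \<Rightarrow> real"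
  shows "(\<Sum>(q,p,k)\<in>{(c,b,a),(b,c,a),(c,a,b),(a,c,b),(b,a,c),(a,b,c)}. g k p q)
   = real (card {[a,b,c],[a,c,b],[b,a,c],[b,c,a],[c,a,b],[c,b,a]}) / 6 *
      (g a b c + g a c b + g b a c + g b c a + g c a b + g c b a)"
proof (cases "a = b")
  case ab: True
  show ?thesis
  proof (cases "a = c")
    case True
    have 1: "{(c,b,a),(b,c,a),(c,a,b),(a,c,b),(b,a,c),(a,b,c)} = {(a,a,a)}" using ab True by auto
    have 2: "{[a,b,c],[a,c,b],[b,a,c],[b,c,a],[c,a,b],[c,b,a]} = {[a,a,a]}" using ab True by auto
    show ?thesis unfolding 1 2 using ab True by simp
  next
    case False
    have 1: "{(c,b,a),(b,c,a),(c,a,b),(a,c,b),(b,a,c),(a,b,c)} = {(c,a,a),(a,c,a),(a,a,c)}" using ab by auto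
    have 2: "{[a,b,c],[a,c,b],[b,a,c],[b,c,a],[c,a,b],[c,b,a]} = {[c,a,a],[a,c,a],[a,a,c]}" using ab by auto
    show ?thesis unfolding 1 2 using ab False by simp
  qed
next
  case ab: False
  show ?thesis
  proof (cases "a = c")
    case True
    have 1: "{(c,b,a),(b,c,a),(c,a,b),(a,c,b),(b,a,c),(a,b,c)} = {(a,b,a),(b,a,a),(a,a,b)}" using True by auto
    have 2: "{[a,b,c],[a,c,b],[b,a,c],[b,c,a],[c,a,b],[c,b,a]} = {[a,b,a],[b,a,a],[a,a,b]}" using True by auto
    show ?thesis unfolding 1 2 using ab True by simp
  next
    case ac: False
    show ?thesis
    proof (cases "b = c")
      case True
      have 1: "{(c,b,a),(b,c,a),(c,a,b),(a,c,b),(b,a,c),(a,b,c)} = {(b,b,a),(b,a,b),(a,b,b)}" using True by auto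
      have 2: "{[a,b,c],[a,c,b],[b,a,c],[b,c,a],[c,a,b],[c,b,a]} = {[a,b,b],[b,a,b],[b,b,a]}" using True by auto
      show ?thesis unfolding 1 2 using ab ac True by simp
    next
      case False
      then show ?thesis using ab ac by simp
    qed
  qed
qed

lemma orbit_sum:
  fixes g :: "nat \<Rightarrow> nat \<Rightarrow> nat \<Rightarrow> real"
  assumes "a < d" "b < d" "c < d"
  shows "(\<Sum>q<d. \<Sum>p<d. \<Sum>k<d. if {#k,p,q#} = {#a,b,c#} then g k p q else 0)
    = real (card (permutations_of_multiset {#a,b,c#})) / 6 *
      (g a b c + g a c b + g b a c + g b c a + g c a b + g c b a)"
proof -
  define Ot where "Ot = {(c,b,a),(b,c,a),(c,a,b),(a,c,b),(b,a,c),(a,b,c)}"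
  have "(\<Sum>q<d. \<Sum>p<d. \<Sum>k<d. if {#k,p,q#} = {#a,b,c#} then g k p q else 0)
     = (\<Sum>(q,p,k)\<in>{..<d} \<times> {..<d} \<times> {..<d}. if {#k,p,q#} = {#a,b,c#} then g k p q else 0)"
    by (simp add: sum.cartesian_product)
  also have "\<dots> = (\<Sum>(q,p,k)\<in>Ot. g k p q)"
  proof (rule sum.mono_neutral_cong_right)
    show "Ot \<subseteq> {..<d} \<times> {..<d} \<times> {..<d}" using assms by (auto simp: Ot_def)
    show "\<forall>i\<in>{..<d} \<times> {..<d} \<times> {..<d} - Ot. (case i of (q,p,k) \<Rightarrow> if {#k,p,q#} = {#a,b,c#} then g k p q else 0) = 0"
    proof
      fix i assume "i \<in> {..<d} \<times> {..<d} \<times> {..<d} - Ot"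
      then obtain q p k where i: "i = (q,p,k)" and nO: "(q,p,k) \<notin> Ot" by (cases i) auto
      have "{#k,p,q#} \<noteq> {#a,b,c#}"
      proof
        assume "{#k,p,q#} = {#a,b,c#}"
        then have "(k,p,q) \<in> {(a,b,c),(a,c,b),(b,a,c),(b,c,a),(c,a,b),(c,b,a)}" by (rule mset3_iff[THEN iffD1])
        then have "(q,p,k) \<in> Ot" unfolding Ot_def by (elim insertE emptyE) simp_all
        then show False using nO by blast
      qed
      then show "(case i of (q,p,k) \<Rightarrow> if {#k,p,q#} = {#a,b,c#} then g k p q else 0) = 0" using i by simp
    qed
    show "\<And>x. x \<in> Ot \<Longrightarrow> (case x of (q,p,k) \<Rightarrow> if {#k,p,q#} = {#a,b,c#} then g k p q else 0) = (case x of (q,p,k) \<Rightarrow> g k p q)"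
      unfolding Ot_def by (elim insertE emptyE) (simp_all add: add_mset_commute)
  qed simp
  also have "\<dots> = real (card {[a,b,c],[a,c,b],[b,a,c],[b,c,a],[c,a,b],[c,b,a]}) / 6 *
      (g a b c + g a c b + g b a c + g b c a + g c a b + g c b a)"
    unfolding Ot_def by (rule six_sum)
  finally show ?thesis unfolding perms3 .
qed

lemma (in vec_space) rank_factor:
  assumes A: "A \<in> carrier_mat n nc"
  shows "\<exists>P R. \<forall>p<n. \<forall>q<nc. A $$ (p,q) = (\<Sum>i<rank A. P p i * R i q)"
proof -
  have e: "{} \<subseteq> set (cols A) \<and> lin_indpt {}"
    by (metis (no_types) empty_subsetI fin_dim finite_basis_exists subset_li_is_li vec_vs vectorspace.basis_def)
  obtain S where S: "finite S" "maximal S (\<lambda>T. T \<subseteq> set (cols A) \<and> lin_indpt T)"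
    using maximal_exists_superset[of "set (cols A)" "\<lambda>T. T \<subseteq> set (cols A) \<and> lin_indpt T" "{}"] e by auto
  have rk: "rank A = card S" using rank_card_indpt[OF A S(2)] .
  have SC: "S \<subseteq> set (cols A)" "lin_indpt S" using S(2) unfolding maximal_def by auto
  have colsC: "set (cols A) \<subseteq> carrier_vec n" using A cols_dim by blast
  have SV: "S \<subseteq> carrier_vec n" using SC colsC by blast
  have inspan: "col A q \<in> span S" if q: "q < nc" for q
  proof -
    have cq: "col A q \<in> set (cols A)" using q A by (metis cols_length cols_nth carrier_matD(2) nth_mem)
    have cv: "col A q \<in> carrier_vec n" using cq colsC by blast
    show ?thesis
    proof (cases "col A q \<in> S")
      case True then show ?thesis using span_mem[OF SV] by auto
    next
      case False
      have "\<not> (S \<union> {col A q} \<subseteq> set (cols A) \<and> lin_indpt (S \<union> {col A q}))"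
      proof
        assume "S \<union> {col A q} \<subseteq> set (cols A) \<and> lin_indpt (S \<union> {col A q})"
        then have "S = S \<union> {col A q}" using S(2) unfolding maximal_def by blast
        then show False using False by blast
      qed
      then have "lin_dep (S \<union> {col A q})" using SC cq by blast
      then show ?thesis using lin_dep_iff_in_span[OF SV SC(2) _ False] cv by simp
    qed
  qed
  have "\<forall>q. \<exists>a. q < nc \<longrightarrow> lincomb a S = col A q"
  proof
    fix q
    show "\<exists>a. q < nc \<longrightarrow> lincomb a S = col A q"
    proof (cases "q < nc")
      case True
      then show ?thesis using finite_in_span[OF S(1) SV inspan[OF True]] by blast
    qed simp
  qed
  then obtain coef where coef: "\<And>q. q < nc \<Longrightarrow> lincomb (coef q) S = col A q" by metis
  obtain bs where bs: "set bs = S" "distinct bs" using finite_distinct_list[OF S(1)] by blast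
  have lb: "length bs = rank A" using rk bs distinct_card by metis
  show ?thesis
  proof (intro exI allI impI)
    fix p q assume p: "p < n" and q: "q < nc"
    have "A $$ (p,q) = col A q $ p" using p q A by simp
    also have "\<dots> = lincomb (coef q) S $ p" using coef[OF q] by simp
    also have "\<dots> = (\<Sum>x\<in>S. coef q x * x $ p)" using lincomb_index[OF p SV] .
    also have "\<dots> = (\<Sum>i<length bs. coef q (bs ! i) * (bs ! i) $ p)"
      using sum.reindex_bij_betw[OF bij_betw_nth[OF bs(2) refl bs(1)[symmetric]], of "\<lambda>x. coef q x * x $ p"]
      by simp
    also have "\<dots> = (\<Sum>i<rank A. (bs ! i) $ p * coef q (bs ! i))" using lb by (simp add: mult.commute)
    finally show "A $$ (p,q) = (\<Sum>i<rank A. (\<lambda>p i. (bs ! i) $ p) p i * (\<lambda>i q. coef q (bs ! i)) i q)" by simp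
  qed
qed

lemma (in vec_space) rank_sum_outer:
  "rank (mat n nc (\<lambda>(k,c). \<Sum>i<m. f i k * g i c)) \<le> m"
proof (induction m)
  case 0
  have "mat n nc (\<lambda>(k,c). \<Sum>i<(0::nat). f i k * g i c) = 0\<^sub>m n nc" by (rule eq_matI) auto
  then show ?case using rank_0I[of nc] by (simp del: lessThan_0)
next
  case (Suc m)
  have "mat n nc (\<lambda>(k,c). \<Sum>i<Suc m. f i k * g i c) =
     mat n nc (\<lambda>(k,c). \<Sum>i<m. f i k * g i c) + mat n nc (\<lambda>(k,c). f m k * g m c)"
    by (rule eq_matI) auto
  moreover have "rank (mat n nc (\<lambda>(k,c). f m k * g m c)) \<le> 1"
    by (rule rank_le_1_product_entries[of _ nc "f m" "g m"]) auto
  moreover have "rank (mat n nc (\<lambda>(k,c). \<Sum>i<m. f i k * g i c) + mat n nc (\<lambda>(k,c). f m k * g m c))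
     \<le> rank (mat n nc (\<lambda>(k,c). \<Sum>i<m. f i k * g i c)) + rank (mat n nc (\<lambda>(k,c). f m k * g m c))"
    by (rule rank_subadditive) auto
  ultimately show ?case using Suc by simp
qed

lemma T_formula:
  assumes "Q \<in> carrier_mat a d" "K \<in> carrier_mat a d" "V \<in> carrier_mat 1 d" "j < t"
    and "a1 < d" "b1 < d" "c1 < d"
  shows "T_tensor Q K V t j a1 b1 c1 =
    (V$$(0,a1) * (attn_A Q K $$ (b1,c1) + attn_A Q K $$ (c1,b1))
   + V$$(0,b1) * (attn_A Q K $$ (a1,c1) + attn_A Q K $$ (c1,a1))
   + V$$(0,c1) * (attn_A Q K $$ (a1,b1) + attn_A Q K $$ (b1,a1))) / 6"
proof -
  define g where "g = (\<lambda>k p q. V$$(0,k) * attn_A Q K $$ (p,q))"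
  have c: "coeff_c Q K V t j {#a1,b1,c1#} = real (card (permutations_of_multiset {#a1,b1,c1#})) / 6 *
      (g a1 b1 c1 + g a1 c1 b1 + g b1 a1 c1 + g b1 c1 a1 + g c1 a1 b1 + g c1 b1 a1)"
    unfolding coeff_c_formula[OF assms(1-4)] using orbit_sum[OF assms(5-7), of g] unfolding g_def by simp
  have "card (permutations_of_multiset {#a1,b1,c1#}) > 0"
    unfolding perms3 by (simp add: card_gt_0_iff)
  then show ?thesis unfolding T_tensor_def y_coord_def c g_def by (simp add: field_simps)
qed

lemma fT_formula:
  fixes v :: "nat \<Rightarrow> real" and A :: "nat \<Rightarrow> nat \<Rightarrow> real"
  assumes "\<And>a b c. a < d \<Longrightarrow> b < d \<Longrightarrow> c < d \<Longrightarrow>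
    T a b c = (v a * (A b c + A c b) + v b * (A a c + A c a) + v c * (A a b + A b a)) / 6"
  shows "f_T d T x = (\<Sum>p<d. \<Sum>q<d. x p * A p q * x q) * (\<Sum>u<d. v u * x u)"
proof -
  define G where "G = (\<lambda>k p q. v k * A p q * x k * x p * x q)"
  define S where "S = (\<Sum>a<d. \<Sum>b<d. \<Sum>c<d. G a b c)"
  have 1: "(\<Sum>a<d. \<Sum>b<d. \<Sum>c<d. G a c b) = S" unfolding S_def
    by (rule sum.cong[OF refl], rule sum.swap)
  have 2: "(\<Sum>a<d. \<Sum>b<d. \<Sum>c<d. G b a c) = S" unfolding S_def
    by (rule sum.swap)
  have 3: "(\<Sum>a<d. \<Sum>b<d. \<Sum>c<d. G b c a) = S"
  proof -
    have "(\<Sum>a<d. \<Sum>b<d. \<Sum>c<d. G b c a) = (\<Sum>b<d. \<Sum>a<d. \<Sum>c<d. G b c a)" by (rule sum.swap)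
    also have "\<dots> = (\<Sum>b<d. \<Sum>c<d. \<Sum>a<d. G b c a)" by (rule sum.cong[OF refl], rule sum.swap)
    finally show ?thesis unfolding S_def .
  qed
  have 4: "(\<Sum>a<d. \<Sum>b<d. \<Sum>c<d. G c a b) = S"
  proof -
    have "(\<Sum>a<d. \<Sum>b<d. \<Sum>c<d. G c a b) = (\<Sum>a<d. \<Sum>c<d. \<Sum>b<d. G c a b)" by (rule sum.cong[OF refl], rule sum.swap)
    also have "\<dots> = (\<Sum>c<d. \<Sum>a<d. \<Sum>b<d. G c a b)" by (rule sum.swap)
    finally show ?thesis unfolding S_def .
  qed
  have 5: "(\<Sum>a<d. \<Sum>b<d. \<Sum>c<d. G c b a) = S"
  proof -
    have "(\<Sum>a<d. \<Sum>b<d. \<Sum>c<d. G c b a) = (\<Sum>a<d. \<Sum>c<d. \<Sum>b<d. G c b a)" by (rule sum.cong[OF refl], rule sum.swap)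
    also have "\<dots> = (\<Sum>c<d. \<Sum>a<d. \<Sum>b<d. G c b a)" by (rule sum.swap)
    also have "\<dots> = (\<Sum>c<d. \<Sum>b<d. \<Sum>a<d. G c b a)" by (rule sum.cong[OF refl], rule sum.swap)
    finally show ?thesis unfolding S_def .
  qed
  have "f_T d T x = (\<Sum>a<d. \<Sum>b<d. \<Sum>c<d. (G a b c + G a c b + G b a c + G b c a + G c a b + G c b a) / 6)"
    unfolding f_T_def G_def by (intro sum.cong refl) (simp add: assms field_simps)
  also have "\<dots> = ((\<Sum>a<d. \<Sum>b<d. \<Sum>c<d. G a b c) + (\<Sum>a<d. \<Sum>b<d. \<Sum>c<d. G a c b)
     + (\<Sum>a<d. \<Sum>b<d. \<Sum>c<d. G b a c) + (\<Sum>a<d. \<Sum>b<d. \<Sum>c<d. G b c a)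
     + (\<Sum>a<d. \<Sum>b<d. \<Sum>c<d. G c a b) + (\<Sum>a<d. \<Sum>b<d. \<Sum>c<d. G c b a)) / 6"
    by (simp only: sum_divide_distrib[symmetric] sum.distrib)
  also have "\<dots> = S" unfolding 1 2 3 4 5 by (simp add: S_def)
  also have "S = (\<Sum>a<d. (v a * x a) * (\<Sum>b<d. \<Sum>c<d. x b * A b c * x c))"
    unfolding S_def G_def by (simp add: sum_distrib_left mult_ac)
  also have "\<dots> = (\<Sum>p<d. \<Sum>q<d. x p * A p q * x q) * (\<Sum>u<d. v u * x u)"
    by (simp add: sum_distrib_right mult.commute)
  finally show ?thesis .
qed

lemma minors_vanish:
  fixes M :: "real mat"
  assumes "M \<in> carrier_mat n nc" "vec_space.rank n M < m" "J \<subseteq> {..<nc}" "card J = m"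
  shows "det (submatrix M I J) = 0"
proof (rule ccontr)
  assume "det (submatrix M I J) \<noteq> 0"
  then have "card {j. j < nc \<and> j \<in> J} \<le> vec_space.rank n M"
    using vec_space.rank_gt_minor[OF assms(1)] by blast
  moreover have "{j. j < nc \<and> j \<in> J} = J" using assms(3) by auto
  ultimately show False using assms by simp
qed

lemma N_rank:
  assumes "Q \<in> carrier_mat a d" "K \<in> carrier_mat a d" "V \<in> carrier_mat 1 d" "j < t"
  shows "vec_space.rank d (N_mat d (T_tensor Q K V t j)) \<le> 2 * vec_space.rank d (attn_A Q K) + 1"
proof -
  interpret vec_space "TYPE(real)" d .
  define A where "A = attn_A Q K"
  define v where "v = (\<lambda>u. V $$ (0,u))"
  have AC: "A \<in> carrier_mat d d" using assms by (simp add: A_def attn_A_def)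
  define r where "r = rank A"
  obtain P R where PR: "\<And>p q. p < d \<Longrightarrow> q < d \<Longrightarrow> A $$ (p,q) = (\<Sum>i<r. P p i * R i q)"
    using rank_factor[OF AC] unfolding r_def by blast
  define N1 where "N1 = mat d d (\<lambda>(k,c). \<Sum>i<r. (\<lambda>i k. v k * P k i / 3) i k * (\<lambda>i c. R i c) i c)"
  define N2 where "N2 = mat d d (\<lambda>(k,c). \<Sum>i<r. (\<lambda>i k. v k * R i k / 3) i k * (\<lambda>i c. P c i) i c)"
  define N3 where "N3 = mat d d (\<lambda>(k,c). \<Sum>i<(1::nat). (\<lambda>i k. A $$ (k,k) / 3) i k * (\<lambda>i c. v c) i c)"
  have e1: "(\<Sum>i<r. v k * P k i / 3 * R i c) = v k * A $$ (k,c) / 3" if "k < d" "c < d" for k c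
    unfolding PR[OF that] sum_distrib_left sum_divide_distrib by (rule sum.cong) simp_all
  have e2: "(\<Sum>i<r. v k * R i k / 3 * P c i) = v k * A $$ (c,k) / 3" if "k < d" "c < d" for k c
    unfolding PR[OF that(2,1)] sum_distrib_left sum_divide_distrib by (rule sum.cong) simp_all
  have C: "N1 \<in> carrier_mat d d" "N2 \<in> carrier_mat d d" "N3 \<in> carrier_mat d d"
    by (auto simp: N1_def N2_def N3_def)
  have NN: "N_mat d (T_tensor Q K V t j) = N1 + N2 + N3"
  proof (rule eq_matI)
    fix k c assume k: "k < dim_row (N1 + N2 + N3)" and c: "c < dim_col (N1 + N2 + N3)"
    then have kc: "k < d" "c < d" by (auto simp: N1_def N2_def N3_def)
    show "N_mat d (T_tensor Q K V t j) $$ (k, c) = (N1 + N2 + N3) $$ (k, c)"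
    proof -
      have n1: "N1 $$ (k,c) = v k * A $$ (k,c) / 3"
        unfolding N1_def index_mat(1)[OF kc] split by (rule e1[OF kc])
      have n2: "N2 $$ (k,c) = v k * A $$ (c,k) / 3"
        unfolding N2_def index_mat(1)[OF kc] split by (rule e2[OF kc])
      have n3: "N3 $$ (k,c) = A $$ (k,k) / 3 * v c"
      proof -
        have "{..<1::nat} = {0}" by auto
        then show ?thesis unfolding N3_def index_mat(1)[OF kc] split by simp
      qed
      have "N_mat d (T_tensor Q K V t j) $$ (k, c) = T_tensor Q K V t j k k c"
        unfolding N_mat_def index_mat(1)[OF kc] split ..
      also have "\<dots> = (v k * (A $$ (k,c) + A $$ (c,k)) + v k * (A $$ (k,c) + A $$ (c,k)) + v c * (A $$ (k,k) + A $$ (k,k))) / 6"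
        unfolding T_formula[OF assms kc(1) kc(1) kc(2)] A_def v_def ..
      also have "\<dots> = (N1 + N2 + N3) $$ (k, c)"
        using kc C by (simp add: n1 n2 n3 field_simps)
      finally show ?thesis .
    qed
  qed (auto simp: N_mat_def N1_def N2_def N3_def)
  have "rank (N1 + N2 + N3) \<le> rank (N1 + N2) + rank N3"
    by (rule rank_subadditive) (use C in auto)
  also have "rank (N1 + N2) \<le> rank N1 + rank N2"
    by (rule rank_subadditive) (use C in auto)
  finally have "rank (N1 + N2 + N3) \<le> rank N1 + rank N2 + rank N3" by simp
  moreover have "rank N1 \<le> r" unfolding N1_def by (rule rank_sum_outer)
  moreover have "rank N2 \<le> r" unfolding N2_def by (rule rank_sum_outer)
  moreover have "rank N3 \<le> 1" unfolding N3_def by (rule rank_sum_outer)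
  ultimately show ?thesis unfolding NN r_def A_def by simp
qed

lemma sum_list_upt_conv: "sum_list (map f [0..<n]) = (\<Sum>u<n. f u)"
  by (simp add: sum_list_distinct_conv_sum_set atLeast0LessThan)
lemma sum_list_concat': "sum_list (concat xs) = sum_list (map sum_list xs)"
  by (induction xs) auto
lemma sum_list_if1: "sum_list (map f (if c then [x] else [])) = (if c then f x else 0)"
  by simp
lemma sum_list_sl_basis: "sum_list (map f (sl_basis d)) = (\<Sum>u<d. \<Sum>v<d. if u \<noteq> v then f (Inl (u,v)) else 0) + (\<Sum>u<d-1. f (Inr u))"
  unfolding sl_basis_def
  by (simp add: map_concat comp_def sum_list_upt_conv sum_list_concat' sum_list_if1 del: map_eq_Cons_conv)
lemma length_if1: "length (if c then [x] else []) = (if c then 1 else 0)"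
  by simp
lemma count_neq: "u < d \<Longrightarrow> (\<Sum>v<d. if u \<noteq> v then 1 else 0::nat) = d - 1"
proof -
  assume u: "u < d"
  have "{..<d} \<inter> {v. u \<noteq> v} = {..<d} - {u}" by auto
  then show ?thesis using u by (simp add: sum.If_cases)
qed
lemma length_sl_basis: "d \<ge> 1 \<Longrightarrow> length (sl_basis d) = d^2 - 1"
proof -
  assume d: "d \<ge> 1"
  have "length (sl_basis d) = (\<Sum>u<d. \<Sum>v<d. if u \<noteq> v then 1 else 0::nat) + (d - 1)"
    unfolding sl_basis_def
    by (simp add: length_concat comp_def sum_list_upt_conv length_if1 del: One_nat_def)
  also have "\<dots> = d * (d - 1) + (d - 1)" using count_neq by simp
  also have "\<dots> = d^2 - 1" using d by (simp add: power2_eq_square algebra_simps)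
  finally show ?thesis .
qed

lemma Inl_in_sl: "p < d \<Longrightarrow> q < d \<Longrightarrow> p \<noteq> q \<Longrightarrow> Inl (p,q) \<in> set (sl_basis d)"
  unfolding sl_basis_def by (simp add: set_concat)
lemma Inr_in_sl: "p < d - 1 \<Longrightarrow> Inr p \<in> set (sl_basis d)"
  unfolding sl_basis_def by simp
lemma MLie_mult: "i < length (monos3 d) \<Longrightarrow> (M_Lie d cf *\<^sub>v vec (length (sl_basis d)) g) $ i
   = (\<Sum>k<length (sl_basis d). lie_act d cf (sl_basis d ! k) (monos3 d ! i) * g k)"
  unfolding M_Lie_def by (simp add: scalar_prod_def atLeast0LessThan)

lemma delta1: "(v::nat) < d \<Longrightarrow> (\<Sum>a<d. \<Sum>b<d. \<Sum>c<d. if a = v then F a b c else (0::real)) = (\<Sum>b<d. \<Sum>c<d. F v b c)"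
proof -
  have "(\<Sum>b<d. \<Sum>c<d. if a = v then F a b c else (0::real)) = (if a = v then (\<Sum>b<d. \<Sum>c<d. F a b c) else 0)" for a
    by (cases "a = v") simp_all
  then show "v < d \<Longrightarrow> ?thesis" by simp
qed
lemma delta2: "(v::nat) < d \<Longrightarrow> (\<Sum>a<d. \<Sum>b<d. \<Sum>c<d. if b = v then F a b c else (0::real)) = (\<Sum>a<d. \<Sum>c<d. F a v c)"
proof -
  have "(\<Sum>c<d. if b = v then F a b c else (0::real)) = (if b = v then (\<Sum>c<d. F a b c) else 0)" for a b
    by (cases "b = v") simp_all
  then show "v < d \<Longrightarrow> ?thesis" by simp
qed
lemma delta3: "(v::nat) < d \<Longrightarrow> (\<Sum>a<d. \<Sum>b<d. \<Sum>c<d. if c = v then F a b c else (0::real)) = (\<Sum>a<d. \<Sum>b<d. F a b v)"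
  by simp

lemma mset_swap_iff:
  assumes "u \<in># m"
  shows "(add_mset v X = m - {#u#} + {#v#}) \<longleftrightarrow> (add_mset u X = m)"
proof -
  have "(add_mset v X = m - {#u#} + {#v#}) \<longleftrightarrow> X = m - {#u#}" by simp
  also have "\<dots> \<longleftrightarrow> add_mset u X = m" using assms by (auto simp: insert_DiffM)
  finally show ?thesis .
qed

lemma E_act_formula:
  fixes T :: "nat \<Rightarrow> nat \<Rightarrow> nat \<Rightarrow> real"
  assumes u: "u < d" and v: "v < d"
  shows "E_act u v (cubic_coeff d T) m = (\<Sum>a<d. \<Sum>b<d. \<Sum>c<d. if {#a,b,c#} = m then
     (if a = u then T v b c else 0) + (if b = u then T a v c else 0) + (if c = u then T a b v else 0) else 0)"
proof (cases "u \<in># m")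
  case False
  have "(if {#a,b,c#} = m then
     (if a = u then T v b c else 0) + (if b = u then T a v c else 0) + (if c = u then T a b v else 0) else 0) = 0" for a b c
    using False by auto
  then show ?thesis using False by (simp add: E_act_def)
next
  case True
  define m0 where "m0 = m - {#u#} + {#v#}"
  have i1: "{#v,b,c#} = m0 \<longleftrightarrow> {#u,b,c#} = m" for b c
    unfolding m0_def using mset_swap_iff[OF True, of v "{#b,c#}"] by simp
  have i2: "{#a,v,c#} = m0 \<longleftrightarrow> {#a,u,c#} = m" for a c
    unfolding m0_def using mset_swap_iff[OF True, of v "{#a,c#}"] by (simp add: add_mset_commute)
  have i3: "{#a,b,v#} = m0 \<longleftrightarrow> {#a,b,u#} = m" for a b
    unfolding m0_def using mset_swap_iff[OF True, of v "{#a,b#}"] by (simp add: add_mset_commute)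
  have "E_act u v (cubic_coeff d T) m = real (count m0 v) * cubic_coeff d T m0"
    by (simp add: E_act_def True Let_def m0_def)
  also have "\<dots> = (\<Sum>a<d. \<Sum>b<d. \<Sum>c<d. if {#a,b,c#} = m0 then
      (if a = v then T a b c else 0) + (if b = v then T a b c else 0) + (if c = v then T a b c else 0) else 0)"
    unfolding cubic_coeff_def sum_distrib_left by (intro sum.cong refl) (auto simp: algebra_simps)
  also have "\<dots> = (\<Sum>a<d. \<Sum>b<d. \<Sum>c<d. if a = v then (if {#a,b,c#} = m0 then T a b c else 0) else 0)
     + (\<Sum>a<d. \<Sum>b<d. \<Sum>c<d. if b = v then (if {#a,b,c#} = m0 then T a b c else 0) else 0)
     + (\<Sum>a<d. \<Sum>b<d. \<Sum>c<d. if c = v then (if {#a,b,c#} = m0 then T a b c else 0) else 0)"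
    unfolding sum.distrib[symmetric] by (intro sum.cong refl) auto
  also have "\<dots> = (\<Sum>b<d. \<Sum>c<d. if {#v,b,c#} = m0 then T v b c else 0)
     + (\<Sum>a<d. \<Sum>c<d. if {#a,v,c#} = m0 then T a v c else 0)
     + (\<Sum>a<d. \<Sum>b<d. if {#a,b,v#} = m0 then T a b v else 0)"
    by (simp only: delta1[OF v] delta2[OF v] delta3[OF v])
  also have "\<dots> = (\<Sum>b<d. \<Sum>c<d. if {#u,b,c#} = m then T v b c else 0)
     + (\<Sum>a<d. \<Sum>c<d. if {#a,u,c#} = m then T a v c else 0)
     + (\<Sum>a<d. \<Sum>b<d. if {#a,b,u#} = m then T a b v else 0)"
    by (simp only: i1 i2 i3)
  also have "\<dots> = (\<Sum>a<d. \<Sum>b<d. \<Sum>c<d. if a = u then (if {#a,b,c#} = m then T v b c else 0) else 0)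
     + (\<Sum>a<d. \<Sum>b<d. \<Sum>c<d. if b = u then (if {#a,b,c#} = m then T a v c else 0) else 0)
     + (\<Sum>a<d. \<Sum>b<d. \<Sum>c<d. if c = u then (if {#a,b,c#} = m then T a b v else 0) else 0)"
    by (simp only: delta1[OF u] delta2[OF u] delta3[OF u])
  also have "\<dots> = (\<Sum>a<d. \<Sum>b<d. \<Sum>c<d. if {#a,b,c#} = m then
     (if a = u then T v b c else 0) + (if b = u then T a v c else 0) + (if c = u then T a b v else 0) else 0)"
    unfolding sum.distrib[symmetric] by (intro sum.cong refl) auto
  finally show ?thesis .
qed

lemma sum_first3:
  fixes f :: "nat \<Rightarrow> real"
  assumes "3 \<le> d" "\<And>i. 3 \<le> i \<Longrightarrow> f i = 0"
  shows "(\<Sum>i<d. f i) = f 0 + f 1 + f 2"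
proof -
  have "(\<Sum>i<d. f i) = (\<Sum>i<3. f i)"
    by (rule sum.mono_neutral_right) (use assms in auto)
  also have "\<dots> = f 0 + f 1 + f 2" by (simp add: numeral_3_eq_3 numeral_2_eq_2)
  finally show ?thesis .
qed

lemma exists_ab:
  fixes v :: "nat \<Rightarrow> real"
  assumes d: "3 \<le> d"
  shows "\<exists>\<alpha> \<beta>. (\<Sum>i<d. \<alpha> i * v i) = 0 \<and> (\<Sum>i<d. \<beta> i * v i) = 0 \<and> (\<Sum>i<d. \<alpha> i * \<beta> i) = 0
    \<and> (\<Sum>i<d. \<alpha> i * \<alpha> i) > 0 \<and> (\<exists>j<d. \<beta> j \<noteq> 0)"
proof (cases "v 0 = 0 \<and> v 1 = 0")
  case True
  define \<alpha> :: "nat \<Rightarrow> real" where "\<alpha> = (\<lambda>i. if i = 0 then 1 else 0)"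
  define \<beta> :: "nat \<Rightarrow> real" where "\<beta> = (\<lambda>i. if i = 1 then 1 else 0)"
  have "(\<Sum>i<d. \<alpha> i * v i) = 0" using True d by (subst sum_first3) (auto simp: \<alpha>_def)
  moreover have "(\<Sum>i<d. \<beta> i * v i) = 0" using True d by (subst sum_first3) (auto simp: \<beta>_def)
  moreover have "(\<Sum>i<d. \<alpha> i * \<beta> i) = 0" using d by (subst sum_first3) (auto simp: \<alpha>_def \<beta>_def)
  moreover have "(\<Sum>i<d. \<alpha> i * \<alpha> i) > 0" using d by (subst sum_first3) (auto simp: \<alpha>_def)
  moreover have "\<beta> 1 \<noteq> 0" "1 < d" using d by (auto simp: \<beta>_def)
  ultimately show ?thesis by blast
next
  case False
  define \<alpha> :: "nat \<Rightarrow> real" where "\<alpha> = (\<lambda>i. if i = 0 then - v 1 else if i = 1 then v 0 else 0)"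
  define \<beta> :: "nat \<Rightarrow> real" where "\<beta> = (\<lambda>i. if i = 0 then - v 0 * v 2 else if i = 1 then - v 1 * v 2
     else if i = 2 then v 0 * v 0 + v 1 * v 1 else 0)"
  have pos: "v 0 * v 0 + v 1 * v 1 > 0" using False
    by (simp add: sum_squares_gt_zero_iff)
  have "(\<Sum>i<d. \<alpha> i * v i) = 0" using d by (subst sum_first3) (auto simp: \<alpha>_def)
  moreover have "(\<Sum>i<d. \<beta> i * v i) = 0" using d by (subst sum_first3) (auto simp: \<beta>_def algebra_simps)
  moreover have "(\<Sum>i<d. \<alpha> i * \<beta> i) = 0" using d by (subst sum_first3) (auto simp: \<alpha>_def \<beta>_def algebra_simps)
  moreover have "(\<Sum>i<d. \<alpha> i * \<alpha> i) > 0" using d pos by (subst sum_first3) (auto simp: \<alpha>_def)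
  moreover have "\<beta> 2 \<noteq> 0" "2 < d" using d pos by (auto simp: \<beta>_def)
  ultimately show ?thesis by blast
qed

lemma exists_M:
  fixes v :: "nat \<Rightarrow> real" and S :: "nat \<Rightarrow> nat \<Rightarrow> real"
  assumes d: "3 \<le> d" and Ssym: "\<And>p q. S p q = S q p"
  shows "\<exists>M. (\<forall>p<d. (\<Sum>q<d. M p q * v q) = 0)
     \<and> (\<forall>p<d. \<forall>c<d. (\<Sum>q<d. M p q * S q c) + (\<Sum>q<d. M c q * S q p) = 0)
     \<and> (\<Sum>p<d. M p p) = 0 \<and> (\<exists>p<d. \<exists>q<d. M p q \<noteq> 0)"
proof -
  obtain \<alpha> \<beta> where av: "(\<Sum>i<d. \<alpha> i * v i) = 0" and bv: "(\<Sum>i<d. \<beta> i * v i) = 0"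
    and ab: "(\<Sum>i<d. \<alpha> i * \<beta> i) = 0" and aa: "(\<Sum>i<d. \<alpha> i * \<alpha> i) > 0"
    and bnz: "\<exists>j<d. \<beta> j \<noteq> 0"
    using exists_ab[OF d, of v] by blast
  define Sa where "Sa = (\<lambda>p. \<Sum>w<d. S p w * \<alpha> w)"
  define Sb where "Sb = (\<lambda>p. \<Sum>w<d. S p w * \<beta> w)"
  have Sbq: "(\<Sum>q<d. \<beta> q * S q c) = Sb c" for c
    unfolding Sb_def by (rule sum.cong) (auto simp: Ssym mult.commute)
  have Saq: "(\<Sum>q<d. \<alpha> q * S q c) = Sa c" for c
    unfolding Sa_def by (rule sum.cong) (auto simp: Ssym mult.commute)
  show ?thesis
  proof (cases "\<forall>p<d. Sb p = 0")
    case True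
    define M where "M = (\<lambda>p q. \<alpha> p * \<beta> q)"
    have 1: "\<forall>p<d. (\<Sum>q<d. M p q * v q) = 0"
      using bv by (simp add: M_def mult.assoc sum_distrib_left[symmetric])
    have 2: "\<forall>p<d. \<forall>c<d. (\<Sum>q<d. M p q * S q c) + (\<Sum>q<d. M c q * S q p) = 0"
      using True Sbq by (simp add: M_def mult.assoc sum_distrib_left[symmetric])
    have 3: "(\<Sum>p<d. M p p) = 0" using ab by (simp add: M_def)
    obtain j where j: "j < d" "\<beta> j \<noteq> 0" using bnz by blast
    obtain i where i: "i < d" "\<alpha> i \<noteq> 0"
    proof (rule ccontr)
      assume "\<not> thesis"
      then have "\<forall>i<d. \<alpha> i = 0" using that by blast
      then have "(\<Sum>i<d. \<alpha> i * \<alpha> i) = 0" by simp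
      then show False using aa by simp
    qed
    have 4: "\<exists>p<d. \<exists>q<d. M p q \<noteq> 0" using i j by (auto simp: M_def)
    show ?thesis using 1 2 3 4 by blast
  next
    case False
    then obtain p0 where p0: "p0 < d" "Sb p0 \<noteq> 0" by blast
    define M where "M = (\<lambda>p q. Sa p * \<beta> q - Sb p * \<alpha> q)"
    have 1: "\<forall>p<d. (\<Sum>q<d. M p q * v q) = 0"
      using av bv by (simp add: M_def left_diff_distrib sum_subtractf mult.assoc sum_distrib_left[symmetric])
    have MS: "(\<Sum>q<d. M p q * S q c) = Sa p * Sb c - Sb p * Sa c" for p c
      using Saq Sbq by (simp add: M_def left_diff_distrib sum_subtractf mult.assoc sum_distrib_left[symmetric])
    have 2: "\<forall>p<d. \<forall>c<d. (\<Sum>q<d. M p q * S q c) + (\<Sum>q<d. M c q * S q p) = 0"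
      by (simp add: MS)
    have "(\<Sum>p<d. Sa p * \<beta> p) = (\<Sum>p<d. \<Sum>w<d. S p w * \<alpha> w * \<beta> p)"
      unfolding Sa_def by (simp add: sum_distrib_right)
    also have "\<dots> = (\<Sum>w<d. \<Sum>p<d. S p w * \<alpha> w * \<beta> p)" by (rule sum.swap)
    also have "\<dots> = (\<Sum>w<d. Sb w * \<alpha> w)"
      unfolding Sb_def sum_distrib_right by (intro sum.cong refl) (simp add: Ssym mult_ac)
    finally have tr: "(\<Sum>p<d. Sa p * \<beta> p) = (\<Sum>w<d. Sb w * \<alpha> w)" .
    have 3: "(\<Sum>p<d. M p p) = 0" using tr by (simp add: M_def sum_subtractf)
    have "(\<Sum>q<d. M p0 q * \<alpha> q) = Sa p0 * (\<Sum>q<d. \<alpha> q * \<beta> q) - Sb p0 * (\<Sum>q<d. \<alpha> q * \<alpha> q)"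
      unfolding sum_distrib_left sum_subtractf[symmetric] by (intro sum.cong refl) (simp add: M_def algebra_simps)
    also have "\<dots> = - Sb p0 * (\<Sum>q<d. \<alpha> q * \<alpha> q)" using ab by simp
    finally have "(\<Sum>q<d. M p0 q * \<alpha> q) \<noteq> 0" using p0 aa by simp
    then obtain q where "q < d" "M p0 q \<noteq> 0"
      by (metis (no_types, lifting) mult_zero_left sum.neutral lessThan_iff)
    then have 4: "\<exists>p<d. \<exists>q<d. M p q \<noteq> 0" using p0 by blast
    show ?thesis using 1 2 3 4 by blast
  qed
qed

lemma swap5:
  "(\<Sum>u<d. \<Sum>v<d. \<Sum>a<d. \<Sum>b<d. \<Sum>c<d. F u v a b c) = (\<Sum>a<d. \<Sum>b<d. \<Sum>c<d. \<Sum>u<d. \<Sum>v<(d::nat). (F u v a b c :: real))"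
proof -
  have "(\<Sum>u<d. \<Sum>v<d. \<Sum>a<d. \<Sum>b<d. \<Sum>c<d. F u v a b c) = (\<Sum>u<d. \<Sum>a<d. \<Sum>v<d. \<Sum>b<d. \<Sum>c<d. F u v a b c)"
    by (rule sum.cong[OF refl], rule sum.swap)
  also have "\<dots> = (\<Sum>a<d. \<Sum>u<d. \<Sum>v<d. \<Sum>b<d. \<Sum>c<d. F u v a b c)" by (rule sum.swap)
  also have "\<dots> = (\<Sum>a<d. \<Sum>u<d. \<Sum>b<d. \<Sum>v<d. \<Sum>c<d. F u v a b c)"
    by (rule sum.cong[OF refl], rule sum.cong[OF refl], rule sum.swap)
  also have "\<dots> = (\<Sum>a<d. \<Sum>b<d. \<Sum>u<d. \<Sum>v<d. \<Sum>c<d. F u v a b c)"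
    by (rule sum.cong[OF refl], rule sum.swap)
  also have "\<dots> = (\<Sum>a<d. \<Sum>b<d. \<Sum>u<d. \<Sum>c<d. \<Sum>v<d. F u v a b c)"
    by (rule sum.cong[OF refl], rule sum.cong[OF refl], rule sum.cong[OF refl], rule sum.swap)
  also have "\<dots> = (\<Sum>a<d. \<Sum>b<d. \<Sum>c<d. \<Sum>u<d. \<Sum>v<d. F u v a b c)"
    by (rule sum.cong[OF refl], rule sum.cong[OF refl], rule sum.swap)
  finally show ?thesis .
qed

lemma delta2D: "(a::nat) < d \<Longrightarrow> (\<Sum>u<d. \<Sum>w<d. if u = a then G w else (0::real)) = (\<Sum>w<d. G w)"
proof -
  have "(\<Sum>w<d. if u = a then G w else (0::real)) = (if u = a then (\<Sum>w<d. G w) else 0)" for u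
    by (cases "u = a") simp_all
  then show "a < d \<Longrightarrow> ?thesis" by simp
qed

lemma term_lemma:
  fixes T :: "nat \<Rightarrow> nat \<Rightarrow> nat \<Rightarrow> real" and S :: "nat \<Rightarrow> nat \<Rightarrow> real"
  assumes Tf: "\<And>a b c. a < d \<Longrightarrow> b < d \<Longrightarrow> c < d \<Longrightarrow> T a b c = (v a * S b c + v b * S a c + v c * S a b) / 6"
    and b: "b < d" and c: "c < d"
  shows "(\<Sum>w<d. M p w * T w b c) = ((\<Sum>w<d. M p w * v w) * S b c + v b * (\<Sum>w<d. M p w * S w c) + v c * (\<Sum>w<d. M p w * S w b)) / 6"
proof -
  have "(\<Sum>w<d. M p w * T w b c) = (\<Sum>w<d. (M p w * v w) * S b c / 6 + v b / 6 * (M p w * S w c) + v c / 6 * (M p w * S w b))"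
    by (rule sum.cong) (simp_all add: Tf b c field_simps)
  also have "\<dots> = ((\<Sum>w<d. M p w * v w) * S b c + v b * (\<Sum>w<d. M p w * S w c) + v c * (\<Sum>w<d. M p w * S w b)) / 6"
    by (simp add: sum.distrib sum_distrib_left[symmetric] sum_divide_distrib[symmetric] sum_distrib_right[symmetric] add_divide_distrib)
  finally show ?thesis .
qed

lemma G_zero:
  fixes T :: "nat \<Rightarrow> nat \<Rightarrow> nat \<Rightarrow> real" and S :: "nat \<Rightarrow> nat \<Rightarrow> real"
  assumes Tf: "\<And>a b c. a < d \<Longrightarrow> b < d \<Longrightarrow> c < d \<Longrightarrow> T a b c = (v a * S b c + v b * S a c + v c * S a b) / 6"
    and Ssym: "\<And>p q. S p q = S q p"
    and Mv: "\<forall>p<d. (\<Sum>q<d. M p q * v q) = 0"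
    and MS: "\<forall>p<d. \<forall>c<d. (\<Sum>q<d. M p q * S q c) + (\<Sum>q<d. M c q * S q p) = 0"
    and abc: "a < d" "b < d" "c < d"
  shows "(\<Sum>w<d. M a w * T w b c) + (\<Sum>w<d. M b w * T a w c) + (\<Sum>w<d. M c w * T a b w) = 0"
proof -
  have s2: "(\<Sum>w<d. M b w * T a w c) = (\<Sum>w<d. M b w * T w a c)"
    by (rule sum.cong) (simp_all add: Tf abc Ssym algebra_simps)
  have s3: "(\<Sum>w<d. M c w * T a b w) = (\<Sum>w<d. M c w * T w a b)"
    by (rule sum.cong) (simp_all add: Tf abc Ssym algebra_simps)
  define Mv' where "Mv' = (\<lambda>p. \<Sum>w<d. M p w * v w)"
  define MS' where "MS' = (\<lambda>p c. \<Sum>w<d. M p w * S w c)"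
  have t1: "(\<Sum>w<d. M a w * T w b c) = (Mv' a * S b c + v b * MS' a c + v c * MS' a b) / 6"
    unfolding Mv'_def MS'_def by (rule term_lemma[OF Tf abc(2) abc(3)])
  have t2: "(\<Sum>w<d. M b w * T w a c) = (Mv' b * S a c + v a * MS' b c + v c * MS' b a) / 6"
    unfolding Mv'_def MS'_def by (rule term_lemma[OF Tf abc(1) abc(3)])
  have t3: "(\<Sum>w<d. M c w * T w a b) = (Mv' c * S a b + v a * MS' c b + v b * MS' c a) / 6"
    unfolding Mv'_def MS'_def by (rule term_lemma[OF Tf abc(1) abc(2)])
  have z: "Mv' a = 0" "Mv' b = 0" "Mv' c = 0" using Mv abc unfolding Mv'_def by auto
  have m1: "MS' c a = - MS' a c" and m2: "MS' b a = - MS' a b" and m3: "MS' c b = - MS' b c"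
    using MS abc unfolding MS'_def by (auto simp: eq_neg_iff_add_eq_0)
  show ?thesis unfolding s2 s3 t1 t2 t3 z m1 m2 m3 by (simp add: field_simps)
qed

lemma lie_sum_zero:
  fixes T :: "nat \<Rightarrow> nat \<Rightarrow> nat \<Rightarrow> real" and S :: "nat \<Rightarrow> nat \<Rightarrow> real"
  assumes Tf: "\<And>a b c. a < d \<Longrightarrow> b < d \<Longrightarrow> c < d \<Longrightarrow> T a b c = (v a * S b c + v b * S a c + v c * S a b) / 6"
    and Ssym: "\<And>p q. S p q = S q p"
    and Mv: "\<forall>p<d. (\<Sum>q<d. M p q * v q) = 0"
    and MS: "\<forall>p<d. \<forall>c<d. (\<Sum>q<d. M p q * S q c) + (\<Sum>q<d. M c q * S q p) = 0"
  shows "(\<Sum>u<d. \<Sum>w<d. M u w * E_act u w (cubic_coeff d T) m) = 0"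
proof -
  define X where "X = (\<lambda>u w a b c. (if a = u then T w b c else 0) + (if b = u then T a w c else 0) + (if c = u then T a b w else 0))"
  have "(\<Sum>u<d. \<Sum>w<d. M u w * E_act u w (cubic_coeff d T) m)
     = (\<Sum>u<d. \<Sum>w<d. \<Sum>a<d. \<Sum>b<d. \<Sum>c<d. M u w * (if {#a,b,c#} = m then X u w a b c else 0))"
    unfolding X_def by (intro sum.cong refl) (simp add: E_act_formula sum_distrib_left)
  also have "\<dots> = (\<Sum>a<d. \<Sum>b<d. \<Sum>c<d. \<Sum>u<d. \<Sum>w<d. M u w * (if {#a,b,c#} = m then X u w a b c else 0))"
    by (rule swap5)
  also have "\<dots> = (\<Sum>a<d. \<Sum>b<d. \<Sum>c<d. (0::real))"
  proof (intro sum.cong refl)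
    fix a b c assume "a \<in> {..<d}" "b \<in> {..<d}" "c \<in> {..<d}"
    then have abc: "a < d" "b < d" "c < d" by auto
    have pw: "M u w * X u w a b c = (if u = a then M a w * T w b c else 0) + (if u = b then M b w * T a w c else 0)
        + (if u = c then M c w * T a b w else 0)" for u w
      unfolding X_def by (auto simp: algebra_simps)
    have "(\<Sum>u<d. \<Sum>w<d. M u w * X u w a b c) =
        (\<Sum>u<d. \<Sum>w<d. if u = a then M a w * T w b c else 0)
      + (\<Sum>u<d. \<Sum>w<d. if u = b then M b w * T a w c else 0)
      + (\<Sum>u<d. \<Sum>w<d. if u = c then M c w * T a b w else 0)"
      unfolding pw by (simp add: sum.distrib)
    also have "\<dots> = (\<Sum>w<d. M a w * T w b c) + (\<Sum>w<d. M b w * T a w c) + (\<Sum>w<d. M c w * T a b w)"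
      by (simp only: delta2D[OF abc(1)] delta2D[OF abc(2)] delta2D[OF abc(3)])
    also have "\<dots> = 0" by (rule G_zero[OF Tf Ssym Mv MS abc])
    finally have z: "(\<Sum>u<d. \<Sum>w<d. M u w * X u w a b c) = 0" .
    show "(\<Sum>u<d. \<Sum>w<d. M u w * (if {#a,b,c#} = m then X u w a b c else 0)) = 0"
      using z by (cases "{#a,b,c#} = m") simp_all
  qed
  also have "\<dots> = 0" by simp
  finally show ?thesis .
qed

lemma rank_lt_of_kernel:
  fixes M :: "real mat"
  assumes M: "M \<in> carrier_mat n nc" and w: "w \<in> carrier_vec nc" "w \<noteq> 0\<^sub>v nc" "M *\<^sub>v w = 0\<^sub>v n"
  shows "vec_space.rank n M < nc"
proof -
  interpret vec_space "TYPE(real)" n .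
  show ?thesis
  proof (cases "distinct (cols M)")
    case True
    have ld: "lin_dep (set (cols M))" using lin_depI[OF M w True] .
    have le: "rank M \<le> nc" using rank_le_nc[OF M] .
    have "rank M \<noteq> nc"
    proof
      assume "rank M = nc"
      then have "lin_indpt (set (cols M))" using full_rank_lin_indpt[OF M _ True] by auto
      then show False using ld by simp
    qed
    then show ?thesis using le by simp
  next
    case False
    obtain S where S: "maximal S (\<lambda>T. T \<subseteq> set (cols M) \<and> lin_indpt T)"
      using maximal_exists[of "(\<lambda>T. T \<subseteq> set (cols M) \<and> lin_indpt T)" "card (set (cols M))" "{}"]
      by (meson List.finite_set card_mono empty_iff empty_subsetI finite_lin_indpt2 rev_finite_subset)
    then have "card S \<le> card (set (cols M))" by (simp add: card_mono maximal_def)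
    moreover have "card (set (cols M)) < length (cols M)"
      using False card_distinct card_length le_neq_implies_less by blast
    moreover have "length (cols M) = nc" using M by simp
    ultimately show ?thesis using rank_card_indpt[OF M S] by simp
  qed
qed

lemma sum_list_map_nth: "sum_list (map f xs) = (\<Sum>k<length xs. f (xs ! k))"
  by (simp add: sum_list_sum_nth atLeast0LessThan)

lemma lie_act_Inl: "lie_act d cf (Inl (u,v)) m = E_act u v cf m"
  unfolding lie_act_def by simp
lemma lie_act_Inr: "lie_act d cf (Inr u) m = E_act u u cf m - E_act (d-1) (d-1) cf m"
  unfolding lie_act_def by simp

lemma lie_rank:
  fixes T :: "nat \<Rightarrow> nat \<Rightarrow> nat \<Rightarrow> real" and A :: "nat \<Rightarrow> nat \<Rightarrow> real" and v :: "nat \<Rightarrow> real"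
  assumes d: "3 \<le> d"
    and Tf: "\<And>a b c. a < d \<Longrightarrow> b < d \<Longrightarrow> c < d \<Longrightarrow>
      T a b c = (v a * (A b c + A c b) + v b * (A a c + A c a) + v c * (A a b + A b a)) / 6"
  shows "vec_space.rank (length (monos3 d)) (M_Lie d (cubic_coeff d T)) < d\<^sup>2 - 1"
proof -
  define S where "S = (\<lambda>p q. A p q + A q p)"
  have Ssym: "\<And>p q. S p q = S q p" by (simp add: S_def add.commute)
  have Tf': "\<And>a b c. a < d \<Longrightarrow> b < d \<Longrightarrow> c < d \<Longrightarrow> T a b c = (v a * S b c + v b * S a c + v c * S a b) / 6"
    unfolding S_def by (rule Tf)
  from exists_M[OF d Ssym, of v] obtain M where MM: "(\<forall>p<d. (\<Sum>q<d. M p q * v q) = 0)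
     \<and> (\<forall>p<d. \<forall>c<d. (\<Sum>q<d. M p q * S q c) + (\<Sum>q<d. M c q * S q p) = 0)
     \<and> (\<Sum>p<d. M p p) = 0 \<and> (\<exists>p<d. \<exists>q<d. M p q \<noteq> 0)" ..
  note Mv = MM[THEN conjunct1]
  note MS = MM[THEN conjunct2, THEN conjunct1]
  note tr = MM[THEN conjunct2, THEN conjunct2, THEN conjunct1]
  note nz = MM[THEN conjunct2, THEN conjunct2, THEN conjunct2]
  define cf where "cf = cubic_coeff d T"
  define sb where "sb = sl_basis d"
  define coefM where "coefM = (\<lambda>b. case b of Inl (u,w) \<Rightarrow> M u w | Inr u \<Rightarrow> M u u)"
  define nc where "nc = length sb"
  have nc: "nc = d\<^sup>2 - 1" unfolding nc_def sb_def using d by (simp add: length_sl_basis)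
  have cI: "coefM (Inl (u,w)) = M u w" for u w unfolding coefM_def by simp
  have cR: "coefM (Inr u) = M u u" for u unfolding coefM_def by simp
  define wv where "wv = vec nc (\<lambda>k. coefM (sb ! k))"
  define nr where "nr = length (monos3 d)"
  have MC: "M_Lie d cf \<in> carrier_mat nr nc" by (simp add: M_Lie_def nr_def nc_def sb_def)
  have wC: "wv \<in> carrier_vec nc" by (simp add: wv_def)
  have dm1: "d = Suc (d - 1)" using d by simp
  have wnz: "wv \<noteq> 0\<^sub>v nc"
  proof
    assume w0: "wv = 0\<^sub>v nc"
    have cz0: "coefM (sb ! k) = 0" if "k < nc" for k
    proof -
      have "wv $ k = coefM (sb ! k)" unfolding wv_def using that by simp
      moreover have "wv $ k = 0" unfolding w0 using that by simp
      ultimately show ?thesis by simp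
    qed
    have cz: "coefM b = 0" if "b \<in> set sb" for b
    proof -
      from that obtain k where k: "k < length sb" "sb ! k = b" by (auto simp: in_set_conv_nth)
      have "coefM (sb ! k) = 0" using cz0 k(1) unfolding nc_def by blast
      then show ?thesis using k(2) by simp
    qed
    have off: "M p q = 0" if "p < d" "q < d" "p \<noteq> q" for p q
    proof -
      have "Inl (p,q) \<in> set sb" using that unfolding sb_def by (rule Inl_in_sl)
      then have "coefM (Inl (p,q)) = 0" by (rule cz)
      then show ?thesis by (simp add: coefM_def)
    qed
    have diag: "M p p = 0" if "p < d - 1" for p
    proof -
      have "Inr p \<in> set sb" using that unfolding sb_def by (rule Inr_in_sl)
      then have "coefM (Inr p) = 0" by (rule cz)
      then show ?thesis by (simp add: coefM_def)
    qed
    have "(\<Sum>p<d. M p p) = (\<Sum>p<d-1. M p p) + M (d-1) (d-1)"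
      by (subst dm1) (simp add: lessThan_Suc)
    then have last: "M (d-1) (d-1) = 0" using tr diag by simp
    have "M p q = 0" if "p < d" "q < d" for p q
    proof (cases "p = q")
      case True
      show ?thesis
      proof (cases "p < d - 1")
        case True then show ?thesis using diag \<open>p = q\<close> by simp
      next
        case False
        then have "p = d - 1" using that by linarith
        then show ?thesis using last \<open>p = q\<close> by simp
      qed
    next
      case False then show ?thesis using off that by blast
    qed
    then show False using nz by blast
  qed
  have ker: "M_Lie d cf *\<^sub>v wv = 0\<^sub>v nr"
  proof (rule eq_vecI)
    fix i assume "i < dim_vec (0\<^sub>v nr :: real vec)"
    then have i: "i < nr" by simp
    define m where "m = monos3 d ! i"
    have "(M_Lie d cf *\<^sub>v wv) $ i = (\<Sum>k<nc. lie_act d cf (sb ! k) m * coefM (sb ! k))"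
      using i unfolding wv_def nc_def sb_def m_def nr_def by (rule MLie_mult)
    also have "\<dots> = sum_list (map (\<lambda>b. lie_act d cf b m * coefM b) sb)"
      by (simp add: sum_list_map_nth nc_def)
    also have "\<dots> = (\<Sum>u<d. \<Sum>w<d. if u \<noteq> w then E_act u w cf m * M u w else 0)
        + (\<Sum>u<d-1. (E_act u u cf m - E_act (d-1) (d-1) cf m) * M u u)"
      unfolding sb_def sum_list_sl_basis lie_act_Inl lie_act_Inr cI cR ..
    also have "(\<Sum>u<d-1. (E_act u u cf m - E_act (d-1) (d-1) cf m) * M u u) = (\<Sum>u<d. M u u * E_act u u cf m)"
    proof -
      have "(\<Sum>p<d. M p p) = (\<Sum>p<d-1. M p p) + M (d-1) (d-1)"
        by (subst dm1) (simp add: lessThan_Suc)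
      then have t: "(\<Sum>p<d-1. M p p) = - M (d-1) (d-1)" using tr by simp
      have "(\<Sum>u<d-1. (E_act u u cf m - E_act (d-1) (d-1) cf m) * M u u)
          = (\<Sum>u<d-1. M u u * E_act u u cf m) - E_act (d-1) (d-1) cf m * (\<Sum>u<d-1. M u u)"
        by (simp add: sum_subtractf sum_distrib_right algebra_simps)
      also have "\<dots> = (\<Sum>u<d-1. M u u * E_act u u cf m) + M (d-1) (d-1) * E_act (d-1) (d-1) cf m"
        using t by simp
      also have "\<dots> = (\<Sum>u<d. M u u * E_act u u cf m)"
        by (subst (2) dm1) (simp add: lessThan_Suc)
      finally show ?thesis .
    qed
    also have "(\<Sum>u<d. \<Sum>w<d. if u \<noteq> w then E_act u w cf m * M u w else 0) + (\<Sum>u<d. M u u * E_act u u cf m)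
        = (\<Sum>u<d. \<Sum>w<d. M u w * E_act u w cf m)"
    proof -
      have "(\<Sum>w<d. M u w * E_act u w cf m) = (\<Sum>w<d. if u \<noteq> w then E_act u w cf m * M u w else 0) + M u u * E_act u u cf m"
        if "u < d" for u
      proof -
        have "(\<Sum>w<d. M u w * E_act u w cf m) = (\<Sum>w<d. (if u \<noteq> w then E_act u w cf m * M u w else 0) + (if u = w then M u w * E_act u w cf m else 0))"
          by (rule sum.cong) auto
        also have "\<dots> = (\<Sum>w<d. if u \<noteq> w then E_act u w cf m * M u w else 0) + M u u * E_act u u cf m"
          using that by (simp add: sum.distrib)
        finally show ?thesis .
      qed
      then show ?thesis by (simp add: sum.distrib)
    qed
    also have "\<dots> = 0" unfolding cf_def by (rule lie_sum_zero[OF Tf' Ssym Mv MS])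
    finally show "(M_Lie d cf *\<^sub>v wv) $ i = 0\<^sub>v nr $ i" using i by simp
  qed (simp add: M_Lie_def nr_def)
  have "vec_space.rank nr (M_Lie d cf) < nc" by (rule rank_lt_of_kernel[OF MC wC wnz ker])
  then show ?thesis unfolding nr_def cf_def nc .
qed

theorem mainTheorem7:
  fixes Q K V :: "real mat" and a d t j :: nat
  assumes "d \<ge> 3"
    and "Q \<in> carrier_mat a d" and "K \<in> carrier_mat a d" and "V \<in> carrier_mat 1 d"
    and "j < t"
  defines "A \<equiv> attn_A Q K"
    and "T \<equiv> T_tensor Q K V t j"
    and "v \<equiv> (\<lambda>u. V $$ (0, u))"
  shows "vec_space.rank d (N_mat d T) \<le> 2 * vec_space.rank d A + 1
     \<and> (2 * vec_space.rank d A + 1 < d \<longrightarrow>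
          (\<forall>I J. I \<subseteq> {..<d} \<and> J \<subseteq> {..<d} \<and> card I = 2 * vec_space.rank d A + 2
                 \<and> card J = 2 * vec_space.rank d A + 2 \<longrightarrow> det (submatrix (N_mat d T) I J) = 0))
     \<and> (\<forall>x. f_T d T x = (\<Sum>p<d. \<Sum>q<d. x p * A $$ (p, q) * x q) * (\<Sum>u<d. v u * x u))
     \<and> vec_space.rank (length (monos3 d)) (M_Lie d (cubic_coeff d T)) < d\<^sup>2 - 1
     \<and> (\<forall>I. I \<subseteq> {..<length (monos3 d)} \<and> card I = d\<^sup>2 - 1 \<longrightarrow>
          det (submatrix (M_Lie d (cubic_coeff d T)) I UNIV) = 0)"
proof -
  have Tf: "T a1 b1 c1 = (v a1 * (A $$ (b1,c1) + A $$ (c1,b1)) + v b1 * (A $$ (a1,c1) + A $$ (c1,a1))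
      + v c1 * (A $$ (a1,b1) + A $$ (b1,a1))) / 6" if "a1 < d" "b1 < d" "c1 < d" for a1 b1 c1
    unfolding T_def A_def v_def by (rule T_formula[OF assms(2-5) that])
  have P1: "vec_space.rank d (N_mat d T) \<le> 2 * vec_space.rank d A + 1"
    unfolding T_def A_def by (rule N_rank[OF assms(2-5)])
  have NC: "N_mat d T \<in> carrier_mat d d" by (simp add: N_mat_def)
  have P2: "\<forall>I J. I \<subseteq> {..<d} \<and> J \<subseteq> {..<d} \<and> card I = 2 * vec_space.rank d A + 2
                 \<and> card J = 2 * vec_space.rank d A + 2 \<longrightarrow> det (submatrix (N_mat d T) I J) = 0"
  proof (intro allI impI)
    fix I J assume h: "I \<subseteq> {..<d} \<and> J \<subseteq> {..<d} \<and> card I = 2 * vec_space.rank d A + 2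
                 \<and> card J = 2 * vec_space.rank d A + 2"
    have "vec_space.rank d (N_mat d T) < 2 * vec_space.rank d A + 2" using P1 by simp
    then show "det (submatrix (N_mat d T) I J) = 0"
      using minors_vanish[OF NC _ _ _, of "2 * vec_space.rank d A + 2" J I] h by blast
  qed
  have P3: "\<forall>x. f_T d T x = (\<Sum>p<d. \<Sum>q<d. x p * A $$ (p, q) * x q) * (\<Sum>u<d. v u * x u)"
  proof
    fix x
    show "f_T d T x = (\<Sum>p<d. \<Sum>q<d. x p * A $$ (p, q) * x q) * (\<Sum>u<d. v u * x u)"
      by (rule fT_formula[where A = "\<lambda>p q. A $$ (p,q)" and v = v]) (rule Tf)
  qed
  have P4: "vec_space.rank (length (monos3 d)) (M_Lie d (cubic_coeff d T)) < d\<^sup>2 - 1"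
    by (rule lie_rank[OF assms(1), where A = "\<lambda>p q. A $$ (p,q)" and v = v]) (rule Tf)
  have P5: "\<forall>I. I \<subseteq> {..<length (monos3 d)} \<and> card I = d\<^sup>2 - 1 \<longrightarrow>
          det (submatrix (M_Lie d (cubic_coeff d T)) I UNIV) = 0"
  proof (intro allI impI)
    fix I assume "I \<subseteq> {..<length (monos3 d)} \<and> card I = d\<^sup>2 - 1"
    have MC: "M_Lie d (cubic_coeff d T) \<in> carrier_mat (length (monos3 d)) (length (sl_basis d))"
      by (simp add: M_Lie_def)
    have len: "length (sl_basis d) = d\<^sup>2 - 1" using assms(1) by (simp add: length_sl_basis)
    show "det (submatrix (M_Lie d (cubic_coeff d T)) I UNIV) = 0"
    proof (rule ccontr)
      assume "det (submatrix (M_Lie d (cubic_coeff d T)) I UNIV) \<noteq> 0"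
      then have "card {j. j < length (sl_basis d) \<and> j \<in> UNIV} \<le> vec_space.rank (length (monos3 d)) (M_Lie d (cubic_coeff d T))"
        using vec_space.rank_gt_minor[OF MC] by blast
      moreover have "{j. j < length (sl_basis d) \<and> j \<in> UNIV} = {..<length (sl_basis d)}" by auto
      ultimately show False using P4 len by simp
    qed
  qed
  show ?thesis using P1 P2 P3 P4 P5 by blast
qed

end
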